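(* For $n\in\mathbb{Z}_+^I$, $j\in\mathcal{J}^\circ$ and $i\in\mathcal{I}$ with $j\in i$, $$E\,M^\circ_{ji}(n)=\frac{1}{\mu_{ji}}\frac{B^{+j}(n-e_i)}{B(n)},$$ where $e_i$ is the $i$-th unit vector.
   Context: Closed multiclass network: finite queue set $\mathcal{J}$, finite route set $\mathcal{I}$, each route a subset of $\mathcal{J}$ with a cyclic visiting order (each queue at most once), rates $\mu_{ji}>0$ for $j\in i$. For $k\in\mathbb{Z}_+^I$, $\mathcal{S}(k)$ is the set of $m=(m_{ji}: j\in i)$ with nonnegative integer entries and $\sum_{j\in i}m_{ji}=k_i$, $m_j=\sum_{i: j\in i}m_{ji}$; the stationary distribution is $\pi(m\mid k)=B(k)^{-1}\prod_{j}\big(\frac{m_j!}{\prod_{i: j\in i}m_{ji}!}\prod_{i: j\in i}\mu_{ji}^{-m_{ji}}\big)$ with normalizing constant $B(k)$. $\Lambda^*(n)$ is the unique optimizer of: maximize $\sum_i n_i\log\Lambda_i$ s.t. $\sum_{i: j\in i}\Lambda_i/\mu_{ji}\le1$ for all $j$, $\Lambda\ge0$, and $\mathcal{J}^\circ=\{j:\sum_{i: j\in i}\Lambda^*_i(n)/\mu_{ji}<1\}$. $M^\circ_{ji}(n)$ is the number of route-$i$ customers at queue $j$ under the stationary distribution $\pi(\cdot\mid n)$. $B^{+j}(k)$ is the normalizing constant (same formula) of the closed network obtained by adding a replica of queue $j$ immediately after $j$ on every route through $j$, with the same rates $\mu_{ji}$ at the replica. *)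

theory Defs
  imports Complex_Main "HOL-Library.Extended_Real"
begin

text \<open>Queues form a finite type 'q, routes a finite type 'r.
  R i is the set of queues on route i (the cyclic visiting order does not enter the
  stationary distribution, so it is not recorded). mu j i is the rate of route-i
  customers at queue j (only used for j in R i).\<close>

text \<open>State space S(k); k is integer-valued so that S(k) is empty (and B(k) = 0)
  when some component of k is negative, e.g. for n - e_i with n_i = 0.\<close>
definition states :: "('r \<Rightarrow> 'q set) \<Rightarrow> ('r \<Rightarrow> int) \<Rightarrow> ('q \<Rightarrow> 'r \<Rightarrow> nat) set" where
  "states R k = {m. (\<forall>i j. j \<notin> R i \<longrightarrow> m j i = 0) \<and>
                    (\<forall>i. int (\<Sum>j\<in>R i. m j i) = k i)}"

definition routes_through :: "('r::finite \<Rightarrow> 'q set) \<Rightarrow> 'q \<Rightarrow> 'r set" where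
  "routes_through R j = {i. j \<in> R i}"

definition queue_total :: "('r::finite \<Rightarrow> 'q set) \<Rightarrow> ('q \<Rightarrow> 'r \<Rightarrow> nat) \<Rightarrow> 'q \<Rightarrow> nat" where
  "queue_total R m j = (\<Sum>i\<in>routes_through R j. m j i)"

definition weight :: "('r::finite \<Rightarrow> 'q::finite set) \<Rightarrow> ('q \<Rightarrow> 'r \<Rightarrow> real) \<Rightarrow> ('q \<Rightarrow> 'r \<Rightarrow> nat) \<Rightarrow> real" where
  "weight R mu m = (\<Prod>j\<in>UNIV.
      (fact (queue_total R m j) / (\<Prod>i\<in>routes_through R j. fact (m j i)))
      * (\<Prod>i\<in>routes_through R j. (1 / mu j i) ^ (m j i)))"

definition Bnorm :: "('r::finite \<Rightarrow> 'q::finite set) \<Rightarrow> ('q \<Rightarrow> 'r \<Rightarrow> real) \<Rightarrow> ('r \<Rightarrow> int) \<Rightarrow> real" where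
  "Bnorm R mu k = (\<Sum>m\<in>states R k. weight R mu m)"

definition stat_pi :: "('r::finite \<Rightarrow> 'q::finite set) \<Rightarrow> ('q \<Rightarrow> 'r \<Rightarrow> real) \<Rightarrow> ('r \<Rightarrow> int) \<Rightarrow> ('q \<Rightarrow> 'r \<Rightarrow> nat) \<Rightarrow> real" where
  "stat_pi R mu k m = (if m \<in> states R k then weight R mu m / Bnorm R mu k else 0)"

definition EM :: "('r::finite \<Rightarrow> 'q::finite set) \<Rightarrow> ('q \<Rightarrow> 'r \<Rightarrow> real) \<Rightarrow> ('r \<Rightarrow> nat) \<Rightarrow> 'q \<Rightarrow> 'r \<Rightarrow> real" where
  "EM R mu n j i = (\<Sum>m\<in>states R (\<lambda>r. int (n r)). real (m j i) * stat_pi R mu (\<lambda>r. int (n r)) m)"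

text \<open>Network with a replica of queue j inserted right after j on every route through j:
  queues Inl q are the original ones, Inr () is the replica, with the same rates as j.\<close>
definition replica_routes :: "('r \<Rightarrow> 'q set) \<Rightarrow> 'q \<Rightarrow> 'r \<Rightarrow> ('q + unit) set" where
  "replica_routes R j i = Inl ` R i \<union> (if j \<in> R i then {Inr ()} else {})"

definition replica_rates :: "('q \<Rightarrow> 'r \<Rightarrow> real) \<Rightarrow> 'q \<Rightarrow> ('q + unit) \<Rightarrow> 'r \<Rightarrow> real" where
  "replica_rates mu j q i = (case q of Inl q' \<Rightarrow> mu q' i | Inr _ \<Rightarrow> mu j i)"

definition Bplus :: "('r::finite \<Rightarrow> 'q::finite set) \<Rightarrow> ('q \<Rightarrow> 'r \<Rightarrow> real) \<Rightarrow> 'q \<Rightarrow> ('r \<Rightarrow> int) \<Rightarrow> real" where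
  "Bplus R mu j k = Bnorm (replica_routes R j) (replica_rates mu j) k"

definition feasible :: "('r::finite \<Rightarrow> 'q set) \<Rightarrow> ('q \<Rightarrow> 'r \<Rightarrow> real) \<Rightarrow> ('r \<Rightarrow> real) \<Rightarrow> bool" where
  "feasible R mu L \<longleftrightarrow> (\<forall>i. L i \<ge> 0) \<and> (\<forall>j. (\<Sum>i\<in>routes_through R j. L i / mu j i) \<le> 1)"

definition objective :: "('r::finite \<Rightarrow> nat) \<Rightarrow> ('r \<Rightarrow> real) \<Rightarrow> ereal" where
  "objective n L = (if \<exists>i. n i > 0 \<and> L i = 0 then -\<infinity>
                    else ereal (\<Sum>i\<in>{i. n i > 0}. real (n i) * ln (L i)))"

definition is_optimizer :: "('r::finite \<Rightarrow> 'q set) \<Rightarrow> ('q \<Rightarrow> 'r \<Rightarrow> real) \<Rightarrow> ('r \<Rightarrow> nat) \<Rightarrow> ('r \<Rightarrow> real) \<Rightarrow> bool" where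
  "is_optimizer R mu n L \<longleftrightarrow> feasible R mu L \<and>
     (\<forall>L'. feasible R mu L' \<longrightarrow> objective n L' \<le> objective n L)"

definition Lambda_star :: "('r::finite \<Rightarrow> 'q set) \<Rightarrow> ('q \<Rightarrow> 'r \<Rightarrow> real) \<Rightarrow> ('r \<Rightarrow> nat) \<Rightarrow> 'r \<Rightarrow> real" where
  "Lambda_star R mu n = (THE L. is_optimizer R mu n L)"

definition Jcirc :: "('r::finite \<Rightarrow> 'q set) \<Rightarrow> ('q \<Rightarrow> 'r \<Rightarrow> real) \<Rightarrow> ('r \<Rightarrow> nat) \<Rightarrow> 'q set" where
  "Jcirc R mu n = {j. (\<Sum>i\<in>routes_through R j. Lambda_star R mu n i / mu j i) < 1}"

end

theory Submission
  imports Defs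
begin


definition Bz :: "'r set \<Rightarrow> ('r \<Rightarrow> nat) \<Rightarrow> ('r \<Rightarrow> nat) set" where
  "Bz T c = {b. (\<forall>i\<in>T. b i \<le> c i) \<and> (\<forall>i. i \<notin> T \<longrightarrow> b i = 0)}"

lemma finite_Bz: assumes "finite T" shows "finite (Bz T c)"
proof -
  have "Bz T c \<subseteq> {f. \<forall>x. (x \<in> T \<longrightarrow> f x \<in> {..sum c T}) \<and> (x \<notin> T \<longrightarrow> f x = 0)}"
    unfolding Bz_def using assms by (auto intro: order_trans[OF _ member_le_sum])
  moreover have "finite {f. \<forall>x. (x \<in> T \<longrightarrow> f x \<in> {..sum c T}) \<and> (x \<notin> T \<longrightarrow> f x = (0::nat))}"
    by (rule finite_set_of_finite_funs) (use assms in auto)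
  ultimately show ?thesis by (rule finite_subset)
qed

lemma vander_multi:
  assumes "finite T"
  shows "(\<Sum>b\<in>{b\<in>Bz T c. sum b T = k}. \<Prod>i\<in>T. c i choose b i) = sum c T choose k"
  using assms
proof (induction T arbitrary: k rule: finite_induct)
  case empty
  have "Bz {} c = {\<lambda>_. 0}" unfolding Bz_def by auto
  then show ?case by (cases k) auto
next
  case (insert t T)
  let ?S = "Sigma {a. a \<le> k \<and> a \<le> c t} (\<lambda>a. {b\<in>Bz T c. sum b T = k - a})"
  have "(\<Sum>b\<in>{b\<in>Bz (insert t T) c. sum b (insert t T) = k}. \<Prod>i\<in>insert t T. c i choose b i)
      = (\<Sum>p\<in>?S. (c t choose fst p) * (\<Prod>i\<in>T. c i choose snd p i))"
  proof (rule sum.reindex_bij_witness[where j="\<lambda>b. (b t, b(t:=0))" and i="\<lambda>p. (snd p)(t := fst p)"])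
    fix b assume b: "b \<in> {b\<in>Bz (insert t T) c. sum b (insert t T) = k}"
    show "((snd (b t, b(t:=0)))(t := fst (b t, b(t:=0)))) = b" by auto
    have s: "sum (b(t:=0)) T = sum b T"
      by (rule sum.cong) (use insert.hyps in auto)
    show "(b t, b(t:=0)) \<in> ?S" using b insert.hyps s unfolding Bz_def by auto
    have p: "(\<Prod>i\<in>T. c i choose (b(t:=0)) i) = (\<Prod>i\<in>T. c i choose b i)"
      by (rule prod.cong) (use insert.hyps in auto)
    show "(c t choose fst (b t, b(t:=0))) * (\<Prod>i\<in>T. c i choose snd (b t, b(t:=0)) i)
        = (\<Prod>i\<in>insert t T. c i choose b i)" using p insert.hyps by simp
  next
    fix p assume p: "p \<in> ?S"
    obtain a b where ab: "p = (a, b)" by (cases p)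
    have bt: "b t = 0" using p ab insert.hyps unfolding Bz_def by auto
    show "(((snd p)(t := fst p)) t, ((snd p)(t := fst p))(t:=0)) = p"
      using ab bt by (auto simp: fun_eq_iff)
    have s: "sum (b(t:=a)) T = sum b T"
      by (rule sum.cong) (use insert.hyps in auto)
    show "(snd p)(t := fst p) \<in> {b\<in>Bz (insert t T) c. sum b (insert t T) = k}"
      using p ab insert.hyps s unfolding Bz_def by auto
  qed
  also have "\<dots> = (\<Sum>a\<in>{a. a \<le> k \<and> a \<le> c t}. \<Sum>b\<in>{b\<in>Bz T c. sum b T = k - a}. (c t choose a) * (\<Prod>i\<in>T. c i choose b i))"
    by (subst sum.Sigma) (use finite_Bz[OF insert.hyps(1)] in \<open>auto simp: split_beta\<close>)
  also have "\<dots> = (\<Sum>a\<in>{a. a \<le> k \<and> a \<le> c t}. (c t choose a) * (sum c T choose (k - a)))"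
    by (simp add: sum_distrib_left[symmetric] insert.IH)
  also have "\<dots> = (\<Sum>a\<le>k. (c t choose a) * (sum c T choose (k - a)))"
    by (rule sum.mono_neutral_left) auto
  also have "\<dots> = sum c (insert t T) choose k"
    using insert.hyps by (simp add: vandermonde)
  finally show ?case .
qed

lemma G_lemma:
  assumes "finite T"
  shows "(\<Sum>b\<in>Bz T c. (fact (\<Sum>i\<in>T. c i - b i) / (\<Prod>i\<in>T. fact (c i - b i)))
                     * (fact (sum b T) / (\<Prod>i\<in>T. fact (b i)))) =
         (real (sum c T) + 1) * (fact (sum c T) / (\<Prod>i\<in>T. fact (c i)) :: real)"
proof -
  define N where "N = sum c T"
  define K where "K = (fact N / (\<Prod>i\<in>T. fact (c i)) :: real)"
  have tm: "(fact (\<Sum>i\<in>T. c i - b i) / (\<Prod>i\<in>T. fact (c i - b i)))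
                     * (fact (sum b T) / (\<Prod>i\<in>T. fact (b i)))
     = K * real (\<Prod>i\<in>T. c i choose b i) / real (N choose sum b T)" if b: "b \<in> Bz T c" for b
  proof -
    have le: "\<And>i. i \<in> T \<Longrightarrow> b i \<le> c i" using b unfolding Bz_def by auto
    have bN: "sum b T \<le> N" unfolding N_def by (rule sum_mono) (use le in auto)
    have s: "(\<Sum>i\<in>T. c i - b i) = N - sum b T" unfolding N_def by (rule sum_subtractf_nat) (use le in auto)
    have p: "real (\<Prod>i\<in>T. c i choose b i) = (\<Prod>i\<in>T. fact (c i)) / ((\<Prod>i\<in>T. fact (b i)) * (\<Prod>i\<in>T. fact (c i - b i)))"
      by (simp add: of_nat_prod binomial_fact[OF le] prod_dividef prod.distrib cong: prod.cong)
    have q: "real (N choose sum b T) = fact N / (fact (sum b T) * fact (N - sum b T))"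
      by (rule binomial_fact[OF bN])
    have nz: "(\<Prod>i\<in>T. fact (c i)) \<noteq> (0::real)" "(\<Prod>i\<in>T. fact (b i)) \<noteq> (0::real)"
      "(\<Prod>i\<in>T. fact (c i - b i)) \<noteq> (0::real)"
      by (auto simp: prod_zero_iff[OF assms])
    show ?thesis unfolding s p q K_def using nz by (simp add: field_simps)
  qed
  have "(\<Sum>b\<in>Bz T c. (fact (\<Sum>i\<in>T. c i - b i) / (\<Prod>i\<in>T. fact (c i - b i)))
                     * (fact (sum b T) / (\<Prod>i\<in>T. fact (b i))))
      = (\<Sum>b\<in>Bz T c. K * real (\<Prod>i\<in>T. c i choose b i) / real (N choose sum b T))"
    by (rule sum.cong) (use tm in auto)
  also have "\<dots> = (\<Sum>k\<in>{..N}. \<Sum>b\<in>{b\<in>Bz T c. sum b T = k}. K * real (\<Prod>i\<in>T. c i choose b i) / real (N choose sum b T))"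
  proof (rule sum.group[symmetric])
    show "finite (Bz T c)" by (rule finite_Bz[OF assms])
    show "(\<lambda>b. sum b T) ` Bz T c \<subseteq> {..N}" unfolding N_def Bz_def by (auto intro!: sum_mono)
  qed simp
  also have "\<dots> = (\<Sum>k\<in>{..N}. K / real (N choose k) * real (\<Sum>b\<in>{b\<in>Bz T c. sum b T = k}. \<Prod>i\<in>T. c i choose b i))"
    by (rule sum.cong) (auto simp: sum_distrib_left of_nat_sum intro!: sum.cong)
  also have "\<dots> = (\<Sum>k\<in>{..N}. K)"
    by (rule sum.cong) (auto simp: vander_multi[OF assms] N_def[symmetric])
  also have "\<dots> = (real N + 1) * K" by simp
  finally show ?thesis unfolding N_def K_def .
qed



definition fac :: "'r set \<Rightarrow> ('r \<Rightarrow> real) \<Rightarrow> ('r \<Rightarrow> nat) \<Rightarrow> real" where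
  "fac T r x = fact (\<Sum>i\<in>T. x i) / (\<Prod>i\<in>T. fact (x i)) * (\<Prod>i\<in>T. (1 / r i) ^ x i)"

lemma weight_fac: "weight R mu m = (\<Prod>q\<in>UNIV. fac (routes_through R q) (mu q) (m q))"
  unfolding weight_def fac_def queue_total_def by simp

lemma rt_replica_Inl: "routes_through (replica_routes R j) (Inl q) = routes_through R q"
  unfolding routes_through_def replica_routes_def by auto

lemma rt_replica_Inr: "routes_through (replica_routes R j) (Inr u) = routes_through R j"
  unfolding routes_through_def replica_routes_def by auto

lemma replica_rates_Inl[simp]: "replica_rates mu j (Inl q) = mu q"
  by (rule ext) (simp add: replica_rates_def)
lemma replica_rates_Inr[simp]: "replica_rates mu j (Inr u) = mu j"
  by (rule ext) (simp add: replica_rates_def)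
lemma mem_rr_Inl[simp]: "Inl q \<in> replica_routes R j i \<longleftrightarrow> q \<in> R i"
  unfolding replica_routes_def by auto
lemma mem_rr_Inr[simp]: "Inr u \<in> replica_routes R j i \<longleftrightarrow> j \<in> R i"
  unfolding replica_routes_def by auto

lemma weight_replica:
  fixes R :: "'r::finite \<Rightarrow> 'q::finite set"
  shows "weight (replica_routes R j) (replica_rates mu j) m =
    (\<Prod>q\<in>UNIV. fac (routes_through R q) (mu q) (m (Inl q))) * fac (routes_through R j) (mu j) (m (Inr ()))"
proof -
  have "weight (replica_routes R j) (replica_rates mu j) m =
     (\<Prod>x\<in>UNIV <+> UNIV. fac (routes_through (replica_routes R j) x) (replica_rates mu j x) (m x))"
    unfolding weight_fac by simp
  also have "\<dots> = (\<Prod>q\<in>UNIV. fac (routes_through R q) (mu q) (m (Inl q))) *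
      (\<Prod>u\<in>(UNIV::unit set). fac (routes_through R j) (mu j) (m (Inr u)))"
    by (subst prod.Plus) (auto simp: rt_replica_Inl rt_replica_Inr replica_rates_def o_def)
  finally show ?thesis by (simp add: UNIV_unit)
qed

lemma sum_replica:
  fixes R :: "'r \<Rightarrow> 'q::finite set"
  shows "(\<Sum>x\<in>replica_routes R j i. m x i) = (\<Sum>q\<in>R i. m (Inl q) i) + (if j \<in> R i then m (Inr ()) i else 0)"
proof -
  have "(\<Sum>x\<in>replica_routes R j i. m x i) = (\<Sum>x\<in>Inl ` R i. m x i) + (\<Sum>x\<in>(if j \<in> R i then {Inr ()} else {}). m x i)"
    unfolding replica_routes_def by (rule sum.union_disjoint) auto
  also have "(\<Sum>x\<in>Inl ` R i. m x i) = (\<Sum>q\<in>R i. m (Inl q) i)"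
    by (subst sum.reindex) (auto simp: inj_on_def)
  finally show ?thesis by simp
qed

lemma mem_states_replica:
  fixes R :: "'r \<Rightarrow> 'q::finite set"
  shows "m \<in> states (replica_routes R j) k \<longleftrightarrow>
    (\<forall>i q. q \<notin> R i \<longrightarrow> m (Inl q) i = 0) \<and> (\<forall>i. j \<notin> R i \<longrightarrow> m (Inr ()) i = 0) \<and>
    (\<forall>i. int ((\<Sum>q\<in>R i. m (Inl q) i) + (if j \<in> R i then m (Inr ()) i else 0)) = k i)"
proof -
  have "(\<forall>i x. x \<notin> replica_routes R j i \<longrightarrow> m x i = 0) \<longleftrightarrow>
    (\<forall>i q. q \<notin> R i \<longrightarrow> m (Inl q) i = 0) \<and> (\<forall>i. j \<notin> R i \<longrightarrow> m (Inr ()) i = 0)"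
    apply safe
      apply simp_all
    subgoal for i x by (cases x) auto
    done
  then show ?thesis unfolding states_def sum_replica by simp
qed



lemma finite_states:
  fixes R :: "'r::finite \<Rightarrow> 'q::finite set"
  shows "finite (states R k)"
proof -
  have "states R k \<subseteq> {m. \<forall>q. (q \<in> UNIV \<longrightarrow> m q \<in> Bz UNIV (\<lambda>i. nat (k i))) \<and> (q \<notin> UNIV \<longrightarrow> m q = undefined)}"
  proof safe
    fix m q assume m: "m \<in> states R k"
    show "m q \<in> Bz UNIV (\<lambda>i. nat (k i))" unfolding Bz_def
    proof safe
      fix i
      show "m q i \<le> nat (k i)"
      proof (cases "q \<in> R i")
        case True
        have "m q i \<le> (\<Sum>j\<in>R i. m j i)" by (rule member_le_sum) (use True in auto)
        moreover have "int (\<Sum>j\<in>R i. m j i) = k i" using m unfolding states_def by auto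
        ultimately show ?thesis by linarith
      next
        case False then show ?thesis using m unfolding states_def by auto
      qed
    qed auto
  qed simp
  moreover have "finite {m. \<forall>q. (q \<in> (UNIV::'q set) \<longrightarrow> m q \<in> Bz UNIV (\<lambda>i. nat (k i))) \<and> (q \<notin> UNIV \<longrightarrow> m q = undefined)}"
    by (rule finite_set_of_finite_funs) (auto intro: finite_Bz)
  ultimately show ?thesis by (rule finite_subset)
qed

lemma sum_if_minus:
  fixes g :: "'a \<Rightarrow> nat"
  assumes "finite A" "j \<in> A" "y \<le> g j"
  shows "(\<Sum>q\<in>A. if q = j then g j - y else g q) + y = (\<Sum>q\<in>A. g q)"
proof -
  have "(\<Sum>q\<in>A. if q = j then g j - y else g q) = (g j - y) + (\<Sum>q\<in>A - {j}. g q)"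
    using assms by (subst sum.remove[of _ j]) (auto intro!: sum.cong)
  moreover have "(\<Sum>q\<in>A. g q) = g j + (\<Sum>q\<in>A - {j}. g q)"
    using assms by (subst sum.remove[of _ j]) auto
  ultimately show ?thesis using assms by simp
qed

lemma Bplus_eq:
  fixes R :: "'r::finite \<Rightarrow> 'q::finite set"
  shows "Bplus R mu j k = (\<Sum>m\<in>states R k. (real (queue_total R m j) + 1) * weight R mu m)"
proof -
  define T where "T = routes_through R j"
  define F where "F = (\<lambda>(m::'q \<Rightarrow> 'r \<Rightarrow> nat, b::'r \<Rightarrow> nat). (\<lambda>(x::'q+unit) i. case x of Inl q \<Rightarrow> (if q = j then m j i - b i else m q i) | Inr _ \<Rightarrow> b i))"
  define H where "H = (\<lambda>mp::('q + unit) \<Rightarrow> 'r \<Rightarrow> nat. ((\<lambda>q i. mp (Inl q) i + (if q = j then mp (Inr ()) i else 0)), (\<lambda>i. mp (Inr ()) i)))"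
  let ?S = "Sigma (states R k) (\<lambda>m. Bz T (m j))"
  have "Bplus R mu j k = (\<Sum>mp\<in>states (replica_routes R j) k. weight (replica_routes R j) (replica_rates mu j) mp)"
    unfolding Bplus_def Bnorm_def ..
  also have "\<dots> = (\<Sum>p\<in>?S. weight (replica_routes R j) (replica_rates mu j) (F p))"
  proof (rule sym, rule sum.reindex_bij_witness[where i=H and j=F])
    fix p assume p: "p \<in> ?S"
    obtain m b where mb: "p = (m, b)" by (cases p)
    have m: "m \<in> states R k" and b: "b \<in> Bz T (m j)" using p mb by auto
    have b0: "\<And>i. j \<notin> R i \<Longrightarrow> b i = 0" using b unfolding Bz_def T_def routes_through_def by auto
    have ble: "\<And>i. j \<in> R i \<Longrightarrow> b i \<le> m j i" using b unfolding Bz_def T_def routes_through_def by auto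
    have bm: "\<And>i. b i \<le> m j i" using b0 ble by (metis le0)
    show "H (F p) = p" unfolding mb F_def H_def using bm by (auto simp: fun_eq_iff)
    show "F p \<in> states (replica_routes R j) k"
      unfolding mem_states_replica
    proof (intro conjI allI impI)
      fix i q assume "q \<notin> R i" then show "F p (Inl q) i = 0"
        using m unfolding mb F_def states_def by auto
    next
      fix i assume "j \<notin> R i" then show "F p (Inr ()) i = 0" unfolding mb F_def using b0 by auto
    next
      fix i
      have "(\<Sum>q\<in>R i. F p (Inl q) i) + (if j \<in> R i then F p (Inr ()) i else 0) = (\<Sum>q\<in>R i. m q i)"
      proof (cases "j \<in> R i")
        case True
        then show ?thesis unfolding mb F_def using sum_if_minus[of "R i" j "b i" "\<lambda>q. m q i"] ble by simp
      next
        case False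
        then show ?thesis unfolding mb F_def by (auto intro!: sum.cong)
      qed
      then show "int ((\<Sum>q\<in>R i. F p (Inl q) i) + (if j \<in> R i then F p (Inr ()) i else 0)) = k i"
        using m unfolding states_def by auto
    qed
  next
    fix mp assume mp: "mp \<in> states (replica_routes R j) k"
    note mps = mp[unfolded mem_states_replica]
    show "F (H mp) = mp" unfolding F_def H_def
      by (auto simp: fun_eq_iff split: sum.splits)
    show "H mp \<in> ?S"
    proof -
      have "fst (H mp) \<in> states R k" unfolding states_def H_def
      proof (intro CollectI conjI allI impI)
        fix i q assume "q \<notin> R i" then show "fst ((\<lambda>q i. mp (Inl q) i + (if q = j then mp (Inr ()) i else 0)), (\<lambda>i. mp (Inr ()) i)) q i = 0"
          using mps by auto
      next
        fix i
        have "(\<Sum>q\<in>R i. mp (Inl q) i + (if q = j then mp (Inr ()) i else 0)) = (\<Sum>q\<in>R i. mp (Inl q) i) + (if j \<in> R i then mp (Inr ()) i else 0)"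
          by (simp add: sum.distrib)
        then show "int (\<Sum>q\<in>R i. fst ((\<lambda>q i. mp (Inl q) i + (if q = j then mp (Inr ()) i else 0)), (\<lambda>i. mp (Inr ()) i)) q i) = k i"
          using mps by simp
      qed
      moreover have "snd (H mp) \<in> Bz T (fst (H mp) j)" unfolding Bz_def H_def T_def routes_through_def
        using mps by auto
      ultimately show ?thesis by (cases "H mp") auto
    qed
  qed simp
  also have "\<dots> = (\<Sum>m\<in>states R k. \<Sum>b\<in>Bz T (m j). weight (replica_routes R j) (replica_rates mu j) (F (m, b)))"
    by (subst sum.Sigma) (auto simp: finite_states finite_Bz T_def routes_through_def)
  also have "\<dots> = (\<Sum>m\<in>states R k. (real (queue_total R m j) + 1) * weight R mu m)"
  proof (rule sum.cong[OF refl])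
    fix m assume m: "m \<in> states R k"
    define P where "P = (\<Prod>q\<in>UNIV - {j}. fac (routes_through R q) (mu q) (m q))"
    define c where "c = m j"
    have fT: "finite T" unfolding T_def routes_through_def by simp
    have w: "weight R mu m = fac T (mu j) c * P"
      unfolding weight_fac P_def T_def c_def by (subst prod.remove[of _ j]) auto
    have wF: "weight (replica_routes R j) (replica_rates mu j) (F (m, b)) =
        ((fact (\<Sum>i\<in>T. c i - b i) / (\<Prod>i\<in>T. fact (c i - b i))) * (fact (sum b T) / (\<Prod>i\<in>T. fact (b i))))
        * ((\<Prod>i\<in>T. (1 / mu j i) ^ c i) * P)" if b: "b \<in> Bz T c" for b
    proof -
      have "(\<Prod>q\<in>UNIV. fac (routes_through R q) (mu q) (F (m, b) (Inl q))) =
           fac T (mu j) (\<lambda>i. c i - b i) * P"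
        unfolding P_def T_def c_def F_def
        by (subst prod.remove[of _ j]) (auto intro!: prod.cong)
      moreover have "(\<Prod>i\<in>T. (1 / mu j i) ^ (c i - b i)) * (\<Prod>i\<in>T. (1 / mu j i) ^ b i) = (\<Prod>i\<in>T. (1 / mu j i) ^ c i)"
        unfolding prod.distrib[symmetric] power_add[symmetric]
        by (rule prod.cong) (use b in \<open>auto simp: Bz_def\<close>)
      ultimately show ?thesis unfolding weight_replica
        by (simp add: fac_def F_def T_def[symmetric] algebra_simps)
    qed
    have "(\<Sum>b\<in>Bz T (m j). weight (replica_routes R j) (replica_rates mu j) (F (m, b)))
        = (\<Sum>b\<in>Bz T c. ((fact (\<Sum>i\<in>T. c i - b i) / (\<Prod>i\<in>T. fact (c i - b i))) * (fact (sum b T) / (\<Prod>i\<in>T. fact (b i)))))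
          * ((\<Prod>i\<in>T. (1 / mu j i) ^ c i) * P)"
      unfolding c_def[symmetric] sum_distrib_right by (rule sum.cong) (auto simp: wF)
    also have "\<dots> = (real (sum c T) + 1) * weight R mu m"
      unfolding G_lemma[OF fT] w fac_def by simp
    finally show "(\<Sum>b\<in>Bz T (m j). weight (replica_routes R j) (replica_rates mu j) (F (m, b))) =
      (real (queue_total R m j) + 1) * weight R mu m"
      unfolding queue_total_def T_def c_def .
  qed
  finally show ?thesis .
qed



lemma prod_bump:
  fixes f :: "'a \<Rightarrow> nat \<Rightarrow> real"
  assumes "finite A" "i \<in> A"
  shows "(\<Prod>a\<in>A. f a (x a + (if a = i then 1 else 0))) * f i (x i) = (\<Prod>a\<in>A. f a (x a)) * f i (x i + 1)"
proof -
  have e: "(\<Prod>a\<in>A - {i}. f a (x a + (if a = i then 1 else 0))) = (\<Prod>a\<in>A - {i}. f a (x a))"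
    by (rule prod.cong) auto
  show ?thesis using assms
    by (simp add: prod.remove[OF assms] e algebra_simps)
qed

lemma fac_bump:
  assumes "finite T" "i \<in> T" "r i \<noteq> 0"
  shows "fac T r (\<lambda>a. x a + (if a = i then 1 else 0)) = fac T r x * (real (sum x T) + 1) / (real (x i) + 1) / r i"
proof -
  have s: "(\<Sum>a\<in>T. x a + (if a = i then 1 else 0)) = sum x T + 1"
    using assms by (simp add: sum.distrib)
  have e1: "(\<Prod>a\<in>T - {i}. fact (x a + (if a = i then 1 else 0)) :: real) = (\<Prod>a\<in>T - {i}. fact (x a))"
    by (rule prod.cong) auto
  have e2: "(\<Prod>a\<in>T - {i}. (1 / r a) ^ (x a + (if a = i then 1 else 0))) = (\<Prod>a\<in>T - {i}. (1 / r a) ^ x a)"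
    by (rule prod.cong) auto
  have P1: "(\<Prod>a\<in>T. fact (x a + (if a = i then 1 else 0)) :: real) = (\<Prod>a\<in>T. fact (x a)) * (real (x i) + 1)"
    by (simp only: prod.remove[OF assms(1,2)] e1) (simp add: algebra_simps)
  have P2: "(\<Prod>a\<in>T. (1 / r a) ^ (x a + (if a = i then 1 else 0))) = (\<Prod>a\<in>T. (1 / r a) ^ x a) * (1 / r i)"
    by (simp only: prod.remove[OF assms(1,2)] e2) (simp add: mult_ac)
  have fs: "(fact (sum x T + 1) :: real) = (real (sum x T) + 1) * fact (sum x T)"
    by (simp add: algebra_simps)
  show ?thesis unfolding fac_def s P1 P2 fs
    by (simp add: field_simps)
qed



lemma sum_inc:
  fixes m :: "'q::finite \<Rightarrow> 'r \<Rightarrow> nat"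
  assumes "j \<in> R i"
  shows "(\<Sum>q\<in>R r. m q r + (if q = j \<and> r = i then 1 else 0)) = (\<Sum>q\<in>R r. m q r) + (if r = i then 1 else 0)"
  using assms by (simp add: sum.distrib)

lemma shift:
  fixes R :: "'r::finite \<Rightarrow> 'q::finite set"
  assumes mu: "mu j i \<noteq> 0" and ji: "j \<in> R i"
  shows "(\<Sum>m\<in>states R (\<lambda>r. int (n r)). real (m j i) * weight R mu m)
    = (1 / mu j i) * (\<Sum>m\<in>states R (\<lambda>r. int (n r) - (if r = i then 1 else 0)). (real (queue_total R m j) + 1) * weight R mu m)"
proof -
  define S0 where "S0 = states R (\<lambda>r. int (n r))"
  define S1 where "S1 = states R (\<lambda>r. int (n r) - (if r = i then 1 else 0))"
  define inc where "inc = (\<lambda>(m::'q \<Rightarrow> 'r \<Rightarrow> nat) q r. m q r + (if q = j \<and> r = i then 1 else 0))"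
  define dec where "dec = (\<lambda>(m::'q \<Rightarrow> 'r \<Rightarrow> nat) q r. m q r - (if q = j \<and> r = i then 1 else 0))"
  have "(\<Sum>m\<in>S0. real (m j i) * weight R mu m) = (\<Sum>m\<in>S0 \<inter> {m. 0 < m j i}. real (m j i) * weight R mu m)"
    by (rule sum.mono_neutral_right) (auto simp: S0_def finite_states)
  also have "\<dots> = (\<Sum>m\<in>S1. (1 / mu j i) * ((real (queue_total R m j) + 1) * weight R mu m))"
  proof (rule sym, rule sum.reindex_bij_witness[where i=dec and j=inc])
    fix m assume m: "m \<in> S1"
    show "dec (inc m) = m" unfolding dec_def inc_def by auto
    show "inc m \<in> S0 \<inter> {m. 0 < m j i}"
    proof -
      have "inc m \<in> S0" unfolding S0_def states_def
      proof (intro CollectI conjI allI impI)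
        fix r q assume "q \<notin> R r" then show "inc m q r = 0"
          using m ji unfolding S1_def states_def inc_def by auto
      next
        fix r
        have "int (\<Sum>q\<in>R r. m q r) = int (n r) - (if r = i then 1 else 0)"
          using m unfolding S1_def states_def by auto
        then show "int (\<Sum>q\<in>R r. inc m q r) = int (n r)"
          unfolding inc_def sum_inc[where R=R and j=j and i=i, OF ji] by auto
      qed
      then show ?thesis unfolding inc_def by auto
    qed
    have rt: "i \<in> routes_through R j" "finite (routes_through R j)" using ji unfolding routes_through_def by auto
    have incj: "inc m j = (\<lambda>a. m j a + (if a = i then 1 else 0))" unfolding inc_def by auto
    have w: "weight R mu (inc m) = weight R mu m * (real (queue_total R m j) + 1) / (real (m j i) + 1) / mu j i"
    proof -
      have e: "(\<Prod>q\<in>UNIV - {j}. fac (routes_through R q) (mu q) (inc m q)) = (\<Prod>q\<in>UNIV - {j}. fac (routes_through R q) (mu q) (m q))"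
        by (rule prod.cong) (auto simp: inc_def)
      show ?thesis unfolding weight_fac
        by (simp only: prod.remove[of UNIV j, simplified] e incj fac_bump[where r="mu j" and i=i and T="routes_through R j", OF rt(2,1) mu])
          (simp add: queue_total_def)
    qed
    show "real (inc m j i) * weight R mu (inc m) = 1 / mu j i * ((real (queue_total R m j) + 1) * weight R mu m)"
    proof -
      have ne: "real (m j i) + 1 \<noteq> 0" by (simp add: add_nonneg_eq_0_iff)
      have ij: "real (inc m j i) = real (m j i) + 1" unfolding inc_def by simp
      have gen: "\<And>a W Q u::real. a \<noteq> 0 \<Longrightarrow> a * (W * Q / a / u) = 1 / u * (Q * W)"
        by (simp add: field_simps)
      show ?thesis unfolding w ij by (rule gen[OF ne])
    qed
  next
    fix m assume m: "m \<in> S0 \<inter> {m. 0 < m j i}"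
    show "inc (dec m) = m" using m unfolding dec_def inc_def by (auto simp: fun_eq_iff)
    show "dec m \<in> S1" unfolding S1_def states_def
    proof (intro CollectI conjI allI impI)
      fix r q assume "q \<notin> R r" then show "dec m q r = 0"
        using m unfolding S0_def states_def dec_def by auto
    next
      fix r
      have idm: "inc (dec m) = m" using m unfolding dec_def inc_def by (auto simp: fun_eq_iff)
      have "int (\<Sum>q\<in>R r. m q r) = int (n r)"
        using m unfolding S0_def states_def by auto
      then have "int (\<Sum>q\<in>R r. inc (dec m) q r) = int (n r)" using idm by simp
      then show "int (\<Sum>q\<in>R r. dec m q r) = int (n r) - (if r = i then 1 else 0)"
        unfolding inc_def sum_inc[where R=R and j=j and i=i, OF ji] by auto
    qed
  qed
  finally show ?thesis unfolding S0_def S1_def by (simp add: sum_distrib_left)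
qed


theorem lemma6:
  fixes R :: "'r::finite \<Rightarrow> 'q::finite set" and mu :: "'q \<Rightarrow> 'r \<Rightarrow> real"
    and n :: "'r \<Rightarrow> nat" and j :: 'q and i :: 'r
  assumes mu_pos: "\<forall>i'. \<forall>j'\<in>R i'. mu j' i' > 0"
    and jJ: "j \<in> Jcirc R mu n"
    and ji: "j \<in> R i"
  shows "EM R mu n j i
       = (1 / mu j i) * (Bplus R mu j (\<lambda>r. int (n r) - (if r = i then 1 else 0))
                          / Bnorm R mu (\<lambda>r. int (n r)))"
proof -
  have mu: "mu j i \<noteq> 0" using mu_pos ji by force
  have "EM R mu n j i = (\<Sum>m\<in>states R (\<lambda>r. int (n r)). real (m j i) * weight R mu m) / Bnorm R mu (\<lambda>r. int (n r))"
    unfolding EM_def sum_divide_distrib by (rule sum.cong) (auto simp: stat_pi_def)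
  also have "\<dots> = (1 / mu j i) * (Bplus R mu j (\<lambda>r. int (n r) - (if r = i then 1 else 0))
                          / Bnorm R mu (\<lambda>r. int (n r)))"
    unfolding shift[where mu=mu and j=j and i=i and R=R and n=n, OF mu ji] Bplus_eq by simp
  finally show ?thesis .
qed

end
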